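(* For a twisted $n$-gon with corner invariants $(x_0,\dots,x_{2n-1})$ define $$\mathcal{F}_1=\prod_{i=0}^{n-1}\frac{x_{2i}}{x_{2i}-1},\quad \mathcal{F}_2=\prod_{i=0}^{n-1}\frac{x_{2i+1}}{x_{2i+1}-1},\quad \mathcal{F}_3=\prod_{i=0}^{n-1}\frac{x_{2i}}{x_{2i+1}},\quad \mathcal{F}_4=\prod_{i=0}^{n-1}\frac{1-x_{2i}}{1-x_{2i+1}}.$$ Each $\mathcal{F}_j$ ($j=1,2,3,4$) is invariant under $T_3$ (and hence under $T_3^{-1}$): if $[P]$ and $T_3[P]$ are defined and $\mathcal{F}_j$ is defined (finite, with nonzero denominators) at both, then $\mathcal{F}_j(T_3[P])=\mathcal{F}_j([P])$. Equivalently, each $\mathcal{F}_j$ is invariant under the rational map $x\mapsto x'$ given by $x'_{2i}=x_{2i-2}\frac{x_{2i-4}+x_{2i-1}-1}{x_{2i-2}x_{2i-1}-(1-x_{2i+1})(1-x_{2i-4})}$, $x'_{2i+1}=x_{2i+3}\frac{x_{2i+2}+x_{2i+5}-1}{x_{2i+2}x_{2i+3}-(1-x_{2i+5})(1-x_{2i})}$ (indices mod $2n$).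
   Context: A twisted $n$-gon is a map $P:\mathbb{Z}\to\mathbb{RP}^2$ with every three consecutive points non-collinear and $P_{i+n}=M(P_i)$ for a fixed $M\in\mathrm{PGL}_3(\mathbb{R})$; $\mathcal{P}_n$ is the set of classes modulo projective equivalence. $T_3$ maps a $3$-nice ($P_i,P_{i+1},P_{i+3},P_{i+4}$ in general position for all $i$) twisted $n$-gon $P$ to $P'$ with $P'_i=P_iP_{i+3}\cap P_{i+1}P_{i+4}$; relabelling indices does not change the $\mathcal{F}_j$. Inverse cross ratio: for four collinear points $A,B,C,D$, map their line projectively to the $x$-axis with coordinates $a,b,c,d$ and set $\chi(A,B,C,D)=\frac{(a-b)(c-d)}{(a-c)(b-d)}$ (value in $\mathbb{R}\cup\{\infty\}$, projectively invariant). Corner invariants: $x_{2i}=\chi(P_{i-2},P_{i-1},P_{i-2}P_{i-1}\cap P_iP_{i+1},P_{i-2}P_{i-1}\cap P_{i+1}P_{i+2})$ and $x_{2i+1}=\chi(P_{i+2},P_{i+1},P_{i+2}P_{i+1}\cap P_iP_{i-1},P_{i+2}P_{i+1}\cap P_{i-1}P_{i-2})$, with $x_{j+2n}=x_j$. *)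

theory Defs
  imports "HOL-Analysis.Analysis"
begin

text \<open>Points of RP^2 are represented by homogeneous coordinate vectors in real^3
  (nonzero; proportional vectors represent the same point).  The line through two
  points A, B has dual coordinates cross3 A B; the intersection of two lines
  l, m is cross3 l m.\<close>

definition collinear3 :: "real^3 \<Rightarrow> real^3 \<Rightarrow> real^3 \<Rightarrow> bool" where
  "collinear3 A B C \<longleftrightarrow> (cross3 A B) \<bullet> C = 0"

definition line_through :: "real^3 \<Rightarrow> real^3 \<Rightarrow> real^3" where
  "line_through A B = cross3 A B"

definition meet :: "real^3 \<Rightarrow> real^3 \<Rightarrow> real^3" where
  "meet l m = cross3 l m"

definition twisted_ngon :: "nat \<Rightarrow> (int \<Rightarrow> real^3) \<Rightarrow> bool" where
  "twisted_ngon n P \<longleftrightarrow>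
     (\<forall>i. \<not> collinear3 (P i) (P (i+1)) (P (i+2))) \<and>
     (\<exists>M :: real^3^3. invertible M \<and>
        (\<forall>i. \<exists>c::real. c \<noteq> 0 \<and> P (i + int n) = c *\<^sub>R (M *v P i)))"

definition general_position4 :: "real^3 \<Rightarrow> real^3 \<Rightarrow> real^3 \<Rightarrow> real^3 \<Rightarrow> bool" where
  "general_position4 A B C D \<longleftrightarrow>
     \<not> collinear3 A B C \<and> \<not> collinear3 A B D \<and> \<not> collinear3 A C D \<and> \<not> collinear3 B C D"

definition three_nice :: "(int \<Rightarrow> real^3) \<Rightarrow> bool" where
  "three_nice P \<longleftrightarrow> (\<forall>i. general_position4 (P i) (P (i+1)) (P (i+3)) (P (i+4)))"

definition T3 :: "(int \<Rightarrow> real^3) \<Rightarrow> (int \<Rightarrow> real^3)" where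
  "T3 P = (\<lambda>i. meet (line_through (P i) (P (i+3))) (line_through (P (i+1)) (P (i+4))))"

text \<open>Inverse cross ratio of four collinear points A,B,C,D (A, B distinct) in
  homogeneous coordinates.  With L = A x B the normal of their line, the scalar
  (X x Y) . L is (a nonzero constant times) the 2x2 determinant of X, Y in any
  projective coordinate of the line, i.e. (up to the scalings of the
  representatives, which cancel) the difference x - y of affine coordinates.
  Hence chi = (a-b)(c-d)/((a-c)(b-d)).  The value infinity (denominator zero)
  is represented by None.\<close>

definition icr :: "real^3 \<Rightarrow> real^3 \<Rightarrow> real^3 \<Rightarrow> real^3 \<Rightarrow> real option" where
  "icr A B C D =
     (let L = cross3 A B;
          br = (\<lambda>X Y. (cross3 X Y) \<bullet> L)
      in if br A C * br B D = 0 then None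
         else Some (br A B * br C D / (br A C * br B D)))"

definition corner_even :: "(int \<Rightarrow> real^3) \<Rightarrow> int \<Rightarrow> real option" where
  "corner_even P i =
     icr (P (i-2)) (P (i-1))
         (meet (line_through (P (i-2)) (P (i-1))) (line_through (P i) (P (i+1))))
         (meet (line_through (P (i-2)) (P (i-1))) (line_through (P (i+1)) (P (i+2))))"

definition corner_odd :: "(int \<Rightarrow> real^3) \<Rightarrow> int \<Rightarrow> real option" where
  "corner_odd P i =
     icr (P (i+2)) (P (i+1))
         (meet (line_through (P (i+2)) (P (i+1))) (line_through (P i) (P (i-1))))
         (meet (line_through (P (i+2)) (P (i+1))) (line_through (P (i-1)) (P (i-2))))"

definition Finv :: "nat \<Rightarrow> nat \<Rightarrow> (int \<Rightarrow> real^3) \<Rightarrow> real option" where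
  "Finv j n P =
     (let I = {0..<int n}; xe = corner_even P; xo = corner_odd P in
      if j = 1 then
        (if (\<forall>i\<in>I. xe i \<noteq> None \<and> the (xe i) - 1 \<noteq> 0)
         then Some (\<Prod>i\<in>I. the (xe i) / (the (xe i) - 1)) else None)
      else if j = 2 then
        (if (\<forall>i\<in>I. xo i \<noteq> None \<and> the (xo i) - 1 \<noteq> 0)
         then Some (\<Prod>i\<in>I. the (xo i) / (the (xo i) - 1)) else None)
      else if j = 3 then
        (if (\<forall>i\<in>I. xe i \<noteq> None \<and> xo i \<noteq> None \<and> the (xo i) \<noteq> 0)
         then Some (\<Prod>i\<in>I. the (xe i) / the (xo i)) else None)
      else if j = 4 then
        (if (\<forall>i\<in>I. xe i \<noteq> None \<and> xo i \<noteq> None \<and> 1 - the (xo i) \<noteq> 0)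
         then Some (\<Prod>i\<in>I. (1 - the (xe i)) / (1 - the (xo i))) else None)
      else None)"

end

theory Submission imports Defs begin
unbundle cross3_syntax

definition tri :: "real^3 \<Rightarrow> real^3 \<Rightarrow> real^3 \<Rightarrow> real" where
  "tri a b c = a \<bullet> (b \<times> c)"

lemma tri_cross_dot: "(a \<times> b) \<bullet> c = tri a b c"
  unfolding tri_def by (simp add: cross3_simps)
lemma dot_cross_tri: "c \<bullet> (a \<times> b) = tri c a b"
  unfolding tri_def by simp
lemma tri_cyc: "tri a b c = tri b c a"
  unfolding tri_def by (simp add: cross3_simps)
lemma tri_swap: "tri a b c = - tri b a c"
  unfolding tri_def by (simp add: cross3_simps)
lemma tri_swap23: "tri a b c = - tri a c b"
  unfolding tri_def by (simp add: cross3_simps)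
lemma cross_cross: "(a \<times> b) \<times> (c \<times> d) = tri a c d *\<^sub>R b - tri b c d *\<^sub>R a"
  unfolding tri_def using exhaust_3 by (force simp add: cross3_simps)
lemma plucker: "tri a c d * tri b d e - tri b c d * tri a d e = tri a b d * tri c d e"
  unfolding tri_def by (simp add: cross3_simps)
lemma M1: "tri (a \<times> b) X (b \<times> c) = - tri a b c * (X \<bullet> b)"
  unfolding tri_def by (simp add: cross3_simps)
lemma M2: "tri (a \<times> b) (b \<times> c) X = tri a b c * (b \<bullet> X)"
  unfolding tri_def by (simp add: cross3_simps)
lemma M3: "tri X (a \<times> b) (b \<times> c) = tri a b c * (X \<bullet> b)"
  unfolding tri_def by (simp add: cross3_simps)
lemma L2: "tri (a \<times> b) (b \<times> c) (d \<times> e) = tri a b c * tri b d e"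
  unfolding tri_def by (simp add: cross3_simps)
lemma L3: "tri (d \<times> e) (a \<times> b) (b \<times> c) = tri a b c * tri d e b"
  unfolding tri_def by (simp add: cross3_simps)
lemma Uexp: "tri (a \<times> b) (c \<times> d) (e \<times> f) = tri c d f * tri a b e - tri c d e * tri a b f"
  unfolding tri_def by (simp add: cross3_simps)
lemma tri_M: "tri (M *v x) (M *v y) (M *v z) = det M * tri x y z"
proof -
  have "tri (M *v x) (M *v y) (M *v z) = x \<bullet> (transpose M *v ((M *v y) \<times> (M *v z)))"
    unfolding tri_def by (metis dot_lmul_matrix vector_transpose_matrix)
  also have "\<dots> = det M * tri x y z" unfolding cross_matrix_mult tri_def by simp
  finally show ?thesis .
qed
lemma tri_scale: "tri (a *\<^sub>R x) (b *\<^sub>R y) (c *\<^sub>R z) = a * b * c * tri x y z"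
  unfolding tri_def by (simp add: cross_mult_left cross_mult_right)

lemma icr_lin: "icr A B (a1 *\<^sub>R A + a2 *\<^sub>R B) (b1 *\<^sub>R A + b2 *\<^sub>R B) =
  (if a2 * b1 * ((A \<times> B) \<bullet> (A \<times> B)) = 0 then None else Some ((a1*b2 - a2*b1)/(-(a2*b1))))"
proof -
  define k where "k = (A \<times> B) \<bullet> (A \<times> B)"
  have BA: "B \<times> A = - (A \<times> B)" by (rule cross_skew)
  have e1: "(A \<times> (a1 *\<^sub>R A + a2 *\<^sub>R B)) \<bullet> (A \<times> B) = a2 * k"
    by (simp add: k_def cross_add_right cross_mult_right)
  have e2: "(B \<times> (b1 *\<^sub>R A + b2 *\<^sub>R B)) \<bullet> (A \<times> B) = - b1 * k"
    by (simp add: k_def cross_add_right cross_mult_right BA)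
  have e3: "((a1 *\<^sub>R A + a2 *\<^sub>R B) \<times> (b1 *\<^sub>R A + b2 *\<^sub>R B)) \<bullet> (A \<times> B) = (a1*b2 - a2*b1) * k"
    by (simp add: k_def cross_add_right cross_add_left cross_mult_right cross_mult_left BA algebra_simps)
  have e4: "(A \<times> B) \<bullet> (A \<times> B) = k" by (simp add: k_def)
  show ?thesis
    unfolding icr_def Let_def e1 e2 e3 e4 k_def[symmetric]
    by (auto simp: field_simps)
qed

lemma meet_form: "(A \<times> B) \<times> (X \<times> Y) = (- tri B X Y) *\<^sub>R A + tri A X Y *\<^sub>R B"
  by (simp add: cross_cross)

lemma icr_meet: "icr A B ((A \<times> B) \<times> (X \<times> Y)) ((A \<times> B) \<times> (Y \<times> Z)) =
   (if tri A X Y * tri B Y Z * ((A \<times> B) \<bullet> (A \<times> B)) = 0 then None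
    else Some (tri A B Y * tri X Y Z / (tri A X Y * tri B Y Z)))"
proof -
  have p: "tri A X Y * tri B Y Z - tri B X Y * tri A Y Z = tri A B Y * tri X Y Z"
    by (rule plucker)
  have q: "(- tri B X Y * tri A Y Z - tri A X Y * - tri B Y Z) / - (tri A X Y * - tri B Y Z)
       = tri A B Y * tri X Y Z / (tri A X Y * tri B Y Z)"
    using p by (simp add: field_simps)
  show ?thesis unfolding meet_form icr_lin q by simp
qed

lemma one_minus_aux: "(D::real) \<noteq> 0 \<Longrightarrow> D - N = R \<Longrightarrow> 1 - N / D = R / D"
proof -
  assume a: "D \<noteq> 0" "D - N = R"
  have "1 - N/D = (D - N)/D" using a by (simp add: field_simps)
  thus ?thesis using a by simp
qed

lemma corner_even0:
  assumes "corner_even Q 0 \<noteq> None"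
  shows "tri (Q (-2)) (Q 0) (Q 1) \<noteq> 0" "tri (Q (-1)) (Q 1) (Q 2) \<noteq> 0"
    "the (corner_even Q 0) = tri (Q (-2)) (Q (-1)) (Q 1) * tri (Q 0) (Q 1) (Q 2) /
        (tri (Q (-2)) (Q 0) (Q 1) * tri (Q (-1)) (Q 1) (Q 2))"
    "1 - the (corner_even Q 0) = tri (Q (-1)) (Q 0) (Q 1) * tri (Q (-2)) (Q 1) (Q 2) /
        (tri (Q (-2)) (Q 0) (Q 1) * tri (Q (-1)) (Q 1) (Q 2))"
proof -
  have ce: "corner_even Q 0 = icr (Q (-2)) (Q (-1)) ((Q (-2) \<times> Q (-1)) \<times> (Q 0 \<times> Q 1)) ((Q (-2) \<times> Q (-1)) \<times> (Q 1 \<times> Q 2))"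
    unfolding corner_even_def meet_def line_through_def by simp
  note c = assms[unfolded ce icr_meet]
  from c show "tri (Q (-2)) (Q 0) (Q 1) \<noteq> 0" "tri (Q (-1)) (Q 1) (Q 2) \<noteq> 0"
    by (auto split: if_splits)
  from c show v: "the (corner_even Q 0) = tri (Q (-2)) (Q (-1)) (Q 1) * tri (Q 0) (Q 1) (Q 2) /
        (tri (Q (-2)) (Q 0) (Q 1) * tri (Q (-1)) (Q 1) (Q 2))"
    unfolding ce icr_meet by (auto split: if_splits)
  have p: "tri (Q (-2)) (Q 0) (Q 1) * tri (Q (-1)) (Q 1) (Q 2) - tri (Q (-1)) (Q 0) (Q 1) * tri (Q (-2)) (Q 1) (Q 2)
     = tri (Q (-2)) (Q (-1)) (Q 1) * tri (Q 0) (Q 1) (Q 2)" by (rule plucker)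
  from c show "1 - the (corner_even Q 0) = tri (Q (-1)) (Q 0) (Q 1) * tri (Q (-2)) (Q 1) (Q 2) /
        (tri (Q (-2)) (Q 0) (Q 1) * tri (Q (-1)) (Q 1) (Q 2))"
  proof -
    have nz: "tri (Q (-2)) (Q 0) (Q 1) * tri (Q (-1)) (Q 1) (Q 2) \<noteq> 0" using c by (auto split: if_splits)
    have dd: "tri (Q (-2)) (Q 0) (Q 1) * tri (Q (-1)) (Q 1) (Q 2) - tri (Q (-2)) (Q (-1)) (Q 1) * tri (Q 0) (Q 1) (Q 2)
       = tri (Q (-1)) (Q 0) (Q 1) * tri (Q (-2)) (Q 1) (Q 2)" using p by linarith
    show ?thesis unfolding v using nz dd by (intro one_minus_aux) auto
  qed
qed

lemma corner_odd0:
  assumes "corner_odd Q 0 \<noteq> None"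
  shows "tri (Q (-1)) (Q 0) (Q 2) \<noteq> 0" "tri (Q (-2)) (Q (-1)) (Q 1) \<noteq> 0"
    "the (corner_odd Q 0) = tri (Q (-1)) (Q 1) (Q 2) * tri (Q (-2)) (Q (-1)) (Q 0) /
        (tri (Q (-1)) (Q 0) (Q 2) * tri (Q (-2)) (Q (-1)) (Q 1))"
    "1 - the (corner_odd Q 0) = tri (Q (-1)) (Q 0) (Q 1) * tri (Q (-2)) (Q (-1)) (Q 2) /
        (tri (Q (-1)) (Q 0) (Q 2) * tri (Q (-2)) (Q (-1)) (Q 1))"
proof -
  have ce: "corner_odd Q 0 = icr (Q 2) (Q 1) ((Q 2 \<times> Q 1) \<times> (Q 0 \<times> Q (-1))) ((Q 2 \<times> Q 1) \<times> (Q (-1) \<times> Q (-2)))"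
    unfolding corner_odd_def meet_def line_through_def by simp
  have s1: "tri (Q 2) (Q 0) (Q (-1)) = - tri (Q (-1)) (Q 0) (Q 2)"
    by (metis tri_cyc tri_swap)
  have s2: "tri (Q 1) (Q (-1)) (Q (-2)) = - tri (Q (-2)) (Q (-1)) (Q 1)"
    by (metis tri_cyc tri_swap)
  have s3: "tri (Q 2) (Q 1) (Q (-1)) = - tri (Q (-1)) (Q 1) (Q 2)"
    by (metis tri_cyc tri_swap)
  have s4: "tri (Q 0) (Q (-1)) (Q (-2)) = - tri (Q (-2)) (Q (-1)) (Q 0)"
    by (metis tri_cyc tri_swap)
  have s5: "tri (Q 1) (Q 0) (Q (-1)) = - tri (Q (-1)) (Q 0) (Q 1)"
    by (metis tri_cyc tri_swap)
  have s6: "tri (Q 2) (Q (-1)) (Q (-2)) = - tri (Q (-2)) (Q (-1)) (Q 2)"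
    by (metis tri_cyc tri_swap)
  note c = assms[unfolded ce icr_meet s1 s2 s3 s4]
  from c show "tri (Q (-1)) (Q 0) (Q 2) \<noteq> 0" "tri (Q (-2)) (Q (-1)) (Q 1) \<noteq> 0"
    by (auto split: if_splits)
  from c show v: "the (corner_odd Q 0) = tri (Q (-1)) (Q 1) (Q 2) * tri (Q (-2)) (Q (-1)) (Q 0) /
        (tri (Q (-1)) (Q 0) (Q 2) * tri (Q (-2)) (Q (-1)) (Q 1))"
    unfolding ce icr_meet s1 s2 s3 s4 by (auto split: if_splits)
  have p: "tri (Q 2) (Q 0) (Q (-1)) * tri (Q 1) (Q (-1)) (Q (-2)) - tri (Q 1) (Q 0) (Q (-1)) * tri (Q 2) (Q (-1)) (Q (-2))
     = tri (Q 2) (Q 1) (Q (-1)) * tri (Q 0) (Q (-1)) (Q (-2))" by (rule plucker)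
  from c show "1 - the (corner_odd Q 0) = tri (Q (-1)) (Q 0) (Q 1) * tri (Q (-2)) (Q (-1)) (Q 2) /
        (tri (Q (-1)) (Q 0) (Q 2) * tri (Q (-2)) (Q (-1)) (Q 1))"
  proof -
    have nz: "tri (Q (-1)) (Q 0) (Q 2) * tri (Q (-2)) (Q (-1)) (Q 1) \<noteq> 0" using c by (auto split: if_splits)
    have dd: "tri (Q (-1)) (Q 0) (Q 2) * tri (Q (-2)) (Q (-1)) (Q 1) - tri (Q (-1)) (Q 1) (Q 2) * tri (Q (-2)) (Q (-1)) (Q 0)
       = tri (Q (-1)) (Q 0) (Q 1) * tri (Q (-2)) (Q (-1)) (Q 2)" using p unfolding s1 s2 s3 s4 s5 s6 by linarith
    show ?thesis unfolding v using nz dd by (intro one_minus_aux) auto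
  qed
qed


definition Ub :: "(int \<Rightarrow> real^3) \<Rightarrow> int \<Rightarrow> real" where
  "Ub q k = tri (q k \<times> q (k+3)) (q (k+1) \<times> q (k+4)) (q (k+2) \<times> q (k+5))"
definition bu :: "(int \<Rightarrow> real^3) \<Rightarrow> int \<Rightarrow> real" where "bu q k = tri (q k) (q (k+1)) (q (k+2))"
definition bv :: "(int \<Rightarrow> real^3) \<Rightarrow> int \<Rightarrow> real" where "bv q k = tri (q k) (q (k+1)) (q (k+3))"
definition bw :: "(int \<Rightarrow> real^3) \<Rightarrow> int \<Rightarrow> real" where "bw q k = tri (q k) (q (k+2)) (q (k+3))"
definition bs :: "(int \<Rightarrow> real^3) \<Rightarrow> int \<Rightarrow> real" where "bs q k = tri (q k) (q (k+3)) (q (k+4))"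
definition bt :: "(int \<Rightarrow> real^3) \<Rightarrow> int \<Rightarrow> real" where "bt q k = tri (q k) (q (k+1)) (q (k+4))"
definition bg :: "(int \<Rightarrow> real^3) \<Rightarrow> int \<Rightarrow> real" where "bg q k = tri (q k) (q (k+3)) (q (k+6))"

definition h1 :: "(int \<Rightarrow> real^3) \<Rightarrow> real" where
  "h1 q = Ub q (-2) * bu q (-1) / (bv q (-2) * bv q (-1) * bv q 0)"

lemma frac1: "1 - x = B \<Longrightarrow> x = A \<Longrightarrow> x / (x - 1) = - (A / B)" for x :: real
proof -
  assume "1 - x = B" "x = A"
  then have "x - 1 = - B" by simp
  then show ?thesis using \<open>x = A\<close> by simp
qed

lemma T3_form: "T3 q k = (q k \<times> q (k+3)) \<times> (q (k+1) \<times> q (k+4))"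
  unfolding T3_def meet_def line_through_def by (simp add: add.assoc)

lemma loc1:
  fixes q :: "int \<Rightarrow> real^3"
  assumes hu: "\<And>k. bu q k \<noteq> 0" and hv: "\<And>k. bv q k \<noteq> 0" and hw: "\<And>k. bw q k \<noteq> 0"
    and hs: "\<And>k. bs q k \<noteq> 0" and ht: "\<And>k. bt q k \<noteq> 0" and hU: "\<And>k. Ub q k \<noteq> 0"
    and ce: "corner_even q 0 \<noteq> None" and ce': "corner_even (T3 q) 0 \<noteq> None"
  shows "the (corner_even (T3 q) 0) / (the (corner_even (T3 q) 0) - 1) * h1 (\<lambda>k. q (1+k))
       = the (corner_even q 0) / (the (corner_even q 0) - 1) * h1 q"
proof -
  have srt1: "\<And>a b c. b < a \<Longrightarrow> tri (q a) (q b) (q c) = - tri (q b) (q a) (q c)" by (metis tri_swap)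
  have srt2: "\<And>a b c. c < b \<Longrightarrow> tri (q a) (q b) (q c) = - tri (q a) (q c) (q b)" by (metis tri_swap23)
  note NZ = hu[of "-4", unfolded bu_def, simplified] hu[of "-3", unfolded bu_def, simplified] hu[of "-2", unfolded bu_def, simplified] hu[of "-1", unfolded bu_def, simplified] hu[of 0, unfolded bu_def, simplified] hu[of 1, unfolded bu_def, simplified] hu[of 2, unfolded bu_def, simplified] hu[of 3, unfolded bu_def, simplified] hu[of 4, unfolded bu_def, simplified] hu[of 5, unfolded bu_def, simplified] hu[of 6, unfolded bu_def, simplified] hv[of "-4", unfolded bv_def, simplified] hv[of "-3", unfolded bv_def, simplified] hv[of "-2", unfolded bv_def, simplified] hv[of "-1", unfolded bv_def, simplified] hv[of 0, unfolded bv_def, simplified] hv[of 1, unfolded bv_def, simplified] hv[of 2, unfolded bv_def, simplified] hv[of 3, unfolded bv_def, simplified] hv[of 4, unfolded bv_def, simplified] hv[of 5, unfolded bv_def, simplified] hv[of 6, unfolded bv_def, simplified] hw[of "-4", unfolded bw_def, simplified] hw[of "-3", unfolded bw_def, simplified] hw[of "-2", unfolded bw_def, simplified] hw[of "-1", unfolded bw_def, simplified] hw[of 0, unfolded bw_def, simplified] hw[of 1, unfolded bw_def, simplified] hw[of 2, unfolded bw_def, simplified] hw[of 3, unfolded bw_def, simplified] hw[of 4, unfolded bw_def, simplified] hw[of 5, unfolded bw_def, simplified] hw[of 6, unfolded bw_def, simplified] hs[of "-4", unfolded bs_def, simplified] hs[of "-3", unfolded bs_def, simplified] hs[of "-2",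 unfolded bs_def, simplified] hs[of "-1", unfolded bs_def, simplified] hs[of 0, unfolded bs_def, simplified] hs[of 1, unfolded bs_def, simplified] hs[of 2, unfolded bs_def, simplified] hs[of 3, unfolded bs_def, simplified] hs[of 4, unfolded bs_def, simplified] hs[of 5, unfolded bs_def, simplified] hs[of 6, unfolded bs_def, simplified] ht[of "-4", unfolded bt_def, simplified] ht[of "-3", unfolded bt_def, simplified] ht[of "-2", unfolded bt_def, simplified] ht[of "-1", unfolded bt_def, simplified] ht[of 0, unfolded bt_def, simplified] ht[of 1, unfolded bt_def, simplified] ht[of 2, unfolded bt_def, simplified] ht[of 3, unfolded bt_def, simplified] ht[of 4, unfolded bt_def, simplified] ht[of 5, unfolded bt_def, simplified] ht[of 6, unfolded bt_def, simplified] hU[of "-4", unfolded Ub_def, simplified] hU[of "-3", unfolded Ub_def, simplified] hU[of "-2", unfolded Ub_def, simplified] hU[of "-1", unfolded Ub_def, simplified] hU[of 0, unfolded Ub_def, simplified] hU[of 1, unfolded Ub_def, simplified] hU[of 2, unfolded Ub_def, simplified] hU[of 3, unfolded Ub_def, simplified] hU[of 4, unfolded Ub_def, simplified] hU[of 5, unfolded Ub_def, simplified] hU[of 6, unfolded Ub_def, simplified]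
  note E = corner_even0[OF ce'] and E0 = corner_even0[OF ce]
  note F = frac1[OF E(4) E(3)] frac1[OF E0(4) E0(3)]
  have g: "tri (q (-1)) (q 2) (q 5) \<noteq> 0 \<and> tri (q (-2)) (q 1) (q 4) \<noteq> 0" using E(1) E(2)
    by (simp add: T3_form L2 L3 M1 tri_cross_dot srt1 srt2)
  show ?thesis unfolding F h1_def Ub_def bu_def bv_def
    using NZ g
    by (simp add: T3_form L2 L3 M1 tri_cross_dot srt1 srt2 field_simps)
qed


definition h2 :: "(int \<Rightarrow> real^3) \<Rightarrow> real" where
  "h2 q = bt q (-2) * bt q (-1) * bt q 0 * bt q 1 / (Ub q 0 * bw q (-1) * bu q (-2))"
definition h3 :: "(int \<Rightarrow> real^3) \<Rightarrow> real" where
  "h3 q = Ub q (-2) * Ub q (-1) * Ub q 0 * bu q (-2) * bu q (-1) * bw q (-2) * bw q (-1)^2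
     / (bg q (-2) * bg q (-1) * bv q (-2)^2 * bv q (-1)^3 * bv q 0^3 * bv q 1)"
definition h4 :: "(int \<Rightarrow> real^3) \<Rightarrow> real" where
  "h4 q = Ub q (-1) * bw q (-2) * bw q (-1) * bt q (-2) * bt q (-1) * bt q 0 * bt q 1
     / (bg q (-2) * bg q (-1) * bv q (-2) * bv q (-1)^2 * bv q 0^2 * bv q 1)"

lemma loc2:
  fixes q :: "int \<Rightarrow> real^3"
  assumes hu: "\<And>k. bu q k \<noteq> 0" and hv: "\<And>k. bv q k \<noteq> 0" and hw: "\<And>k. bw q k \<noteq> 0"
    and hs: "\<And>k. bs q k \<noteq> 0" and ht: "\<And>k. bt q k \<noteq> 0" and hU: "\<And>k. Ub q k \<noteq> 0"
    and ce: "corner_odd q 0 \<noteq> None" and ce': "corner_odd (T3 q) 0 \<noteq> None"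
  shows "the (corner_odd (T3 q) 0) / (the (corner_odd (T3 q) 0) - 1) * h2 (\<lambda>k. q (1+k))
       = the (corner_odd q 0) / (the (corner_odd q 0) - 1) * h2 q"
proof -
  have srt1: "\<And>a b c. b < a \<Longrightarrow> tri (q a) (q b) (q c) = - tri (q b) (q a) (q c)" by (metis tri_swap)
  have srt2: "\<And>a b c. c < b \<Longrightarrow> tri (q a) (q b) (q c) = - tri (q a) (q c) (q b)" by (metis tri_swap23)
  note NZ = hu[of "-4", unfolded bu_def, simplified] hu[of "-3", unfolded bu_def, simplified] hu[of "-2", unfolded bu_def, simplified] hu[of "-1", unfolded bu_def, simplified] hu[of 0, unfolded bu_def, simplified] hu[of 1, unfolded bu_def, simplified] hu[of 2, unfolded bu_def, simplified] hu[of 3, unfolded bu_def, simplified] hu[of 4, unfolded bu_def, simplified] hu[of 5, unfolded bu_def, simplified] hu[of 6, unfolded bu_def, simplified] hv[of "-4", unfolded bv_def, simplified] hv[of "-3", unfolded bv_def, simplified] hv[of "-2", unfolded bv_def, simplified] hv[of "-1", unfolded bv_def, simplified] hv[of 0, unfolded bv_def, simplified] hv[of 1, unfolded bv_def, simplified] hv[of 2, unfolded bv_def, simplified] hv[of 3, unfolded bv_def, simplified] hv[of 4, unfolded bv_def, simplified] hv[of 5, unfolded bv_def, simplified] hv[of 6, unfolded bv_def, simplified] hw[of "-4", unfolded bw_def, simplified] hw[of "-3", unfolded bw_def, simplified] hw[of "-2", unfolded bw_def, simplified] hw[of "-1", unfolded bw_def, simplified] hw[of 0, unfolded bw_def, simplified]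 hw[of 1, unfolded bw_def, simplified] hw[of 2, unfolded bw_def, simplified] hw[of 3, unfolded bw_def, simplified] hw[of 4, unfolded bw_def, simplified] hw[of 5, unfolded bw_def, simplified] hw[of 6, unfolded bw_def, simplified] hs[of "-4", unfolded bs_def, simplified] hs[of "-3", unfolded bs_def, simplified] hs[of "-2", unfolded bs_def, simplified] hs[of "-1", unfolded bs_def, simplified] hs[of 0, unfolded bs_def, simplified] hs[of 1, unfolded bs_def, simplified] hs[of 2, unfolded bs_def, simplified] hs[of 3, unfolded bs_def, simplified] hs[of 4, unfolded bs_def, simplified] hs[of 5, unfolded bs_def, simplified] hs[of 6, unfolded bs_def, simplified] ht[of "-4", unfolded bt_def, simplified] ht[of "-3", unfolded bt_def, simplified] ht[of "-2", unfolded bt_def, simplified] ht[of "-1", unfolded bt_def, simplified] ht[of 0, unfolded bt_def, simplified] ht[of 1, unfolded bt_def, simplified] ht[of 2, unfolded bt_def, simplified] ht[of 3, unfolded bt_def, simplified] ht[of 4, unfolded bt_def, simplified] ht[of 5, unfolded bt_def, simplified] ht[of 6, unfolded bt_def, simplified] hU[of "-4", unfolded Ub_def, simplified] hU[of "-3", unfolded Ub_def, simplified] hU[of "-2", unfolded Ub_def, simplified] hU[of "-1", unfolded Ub_def, simplified] hU[of 0, unfolded Ub_def, simplified] hU[of 1, unfolded Ub_def, simplified] hU[of 2, unfolded Ub_def, simplified] hU[of 3, unfolded Ub_def, simplified] hU[of 4, unfolded Ub_def, simplified] hU[of 5, unfolded Ub_def, simplified] hU[of 6, unfolded Ub_def,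 simplified]
  note E = corner_odd0[OF ce'] and E0 = corner_odd0[OF ce]
  note F = frac1[OF E(4) E(3)] frac1[OF E0(4) E0(3)]
  show ?thesis unfolding F h2_def Ub_def bu_def bv_def bw_def bt_def
    using NZ E(1) E(2)
    by (simp add: T3_form L2 L3 M1 tri_cross_dot srt1 srt2 field_simps)
qed

lemma loc3:
  fixes q :: "int \<Rightarrow> real^3"
  assumes hu: "\<And>k. bu q k \<noteq> 0" and hv: "\<And>k. bv q k \<noteq> 0" and hw: "\<And>k. bw q k \<noteq> 0"
    and hs: "\<And>k. bs q k \<noteq> 0" and ht: "\<And>k. bt q k \<noteq> 0" and hU: "\<And>k. Ub q k \<noteq> 0"
    and ce: "corner_even q 0 \<noteq> None" and ce': "corner_even (T3 q) 0 \<noteq> None"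
    and co: "corner_odd q 0 \<noteq> None" and co': "corner_odd (T3 q) 0 \<noteq> None"
  shows "the (corner_even (T3 q) 0) / the (corner_odd (T3 q) 0) * h3 (\<lambda>k. q (1+k))
       = the (corner_even q 0) / the (corner_odd q 0) * h3 q"
proof -
  have srt1: "\<And>a b c. b < a \<Longrightarrow> tri (q a) (q b) (q c) = - tri (q b) (q a) (q c)" by (metis tri_swap)
  have srt2: "\<And>a b c. c < b \<Longrightarrow> tri (q a) (q b) (q c) = - tri (q a) (q c) (q b)" by (metis tri_swap23)
  note NZ = hu[of "-4", unfolded bu_def, simplified] hu[of "-3", unfolded bu_def, simplified] hu[of "-2", unfolded bu_def, simplified] hu[of "-1", unfolded bu_def, simplified] hu[of 0, unfolded bu_def, simplified] hu[of 1, unfolded bu_def, simplified] hu[of 2, unfolded bu_def, simplified] hu[of 3, unfolded bu_def, simplified] hu[of 4, unfolded bu_def, simplified] hu[of 5, unfolded bu_def, simplified] hu[of 6, unfolded bu_def, simplified] hv[of "-4", unfolded bv_def, simplified] hv[of "-3", unfolded bv_def, simplified] hv[of "-2", unfolded bv_def, simplified] hv[of "-1", unfolded bv_def, simplified] hv[of 0, unfolded bv_def, simplified] hv[of 1, unfolded bv_def, simplified] hv[of 2, unfolded bv_def, simplified] hv[of 3, unfolded bv_def, simplified] hv[of 4, unfolded bv_def, simplified] hv[of 5, unfolded bv_def, simplified] hv[of 6, unfolded bv_def, simplified] hw[of "-4", unfolded bw_def, simplified] hw[of "-3", unfolded bw_def, simplified] hw[of "-2", unfolded bw_def, simplified] hw[of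 "-1", unfolded bw_def, simplified] hw[of 0, unfolded bw_def, simplified] hw[of 1, unfolded bw_def, simplified] hw[of 2, unfolded bw_def, simplified] hw[of 3, unfolded bw_def, simplified] hw[of 4, unfolded bw_def, simplified] hw[of 5, unfolded bw_def, simplified] hw[of 6, unfolded bw_def, simplified] hs[of "-4", unfolded bs_def, simplified] hs[of "-3", unfolded bs_def, simplified] hs[of "-2", unfolded bs_def, simplified] hs[of "-1", unfolded bs_def, simplified] hs[of 0, unfolded bs_def, simplified] hs[of 1, unfolded bs_def, simplified] hs[of 2, unfolded bs_def, simplified] hs[of 3, unfolded bs_def, simplified] hs[of 4, unfolded bs_def, simplified] hs[of 5, unfolded bs_def, simplified] hs[of 6, unfolded bs_def, simplified] ht[of "-4", unfolded bt_def, simplified] ht[of "-3", unfolded bt_def, simplified] ht[of "-2", unfolded bt_def, simplified] ht[of "-1", unfolded bt_def, simplified] ht[of 0, unfolded bt_def, simplified] ht[of 1, unfolded bt_def, simplified] ht[of 2, unfolded bt_def, simplified] ht[of 3, unfolded bt_def, simplified] ht[of 4, unfolded bt_def, simplified] ht[of 5, unfolded bt_def, simplified] ht[of 6, unfolded bt_def, simplified] hU[of "-4", unfolded Ub_def, simplified] hU[of "-3", unfolded Ub_def, simplified] hU[of "-2", unfolded Ub_def, simplified] hU[of "-1", unfolded Ub_def, simplified] hU[of 0, unfolded Ub_def, simplified] hU[of 1, unfolded Ub_def, simplified] hU[of 2, unfolded Ub_def, simplified] hU[of 3, unfolded Ub_def, simplified] hU[of 4, unfolded Ub_def, simplified] hU[of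 5, unfolded Ub_def, simplified] hU[of 6, unfolded Ub_def, simplified]
  note E = corner_even0[OF ce'] and E0 = corner_even0[OF ce]
  note O = corner_odd0[OF co'] and O0 = corner_odd0[OF co]
  show ?thesis unfolding E(3) E0(3) O(3) O0(3) h3_def Ub_def bu_def bv_def bw_def bt_def bg_def
    using NZ E(1) E(2) O(1) O(2)
    by (simp add: T3_form L2 L3 M1 tri_cross_dot srt1 srt2 field_simps power2_eq_square power3_eq_cube)
qed

lemma loc4:
  fixes q :: "int \<Rightarrow> real^3"
  assumes hu: "\<And>k. bu q k \<noteq> 0" and hv: "\<And>k. bv q k \<noteq> 0" and hw: "\<And>k. bw q k \<noteq> 0"
    and hs: "\<And>k. bs q k \<noteq> 0" and ht: "\<And>k. bt q k \<noteq> 0" and hU: "\<And>k. Ub q k \<noteq> 0"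
    and ce: "corner_even q 0 \<noteq> None" and ce': "corner_even (T3 q) 0 \<noteq> None"
    and co: "corner_odd q 0 \<noteq> None" and co': "corner_odd (T3 q) 0 \<noteq> None"
  shows "(1 - the (corner_even (T3 q) 0)) / (1 - the (corner_odd (T3 q) 0)) * h4 (\<lambda>k. q (1+k))
       = (1 - the (corner_even q 0)) / (1 - the (corner_odd q 0)) * h4 q"
proof -
  have srt1: "\<And>a b c. b < a \<Longrightarrow> tri (q a) (q b) (q c) = - tri (q b) (q a) (q c)" by (metis tri_swap)
  have srt2: "\<And>a b c. c < b \<Longrightarrow> tri (q a) (q b) (q c) = - tri (q a) (q c) (q b)" by (metis tri_swap23)
  note NZ = hu[of "-4", unfolded bu_def, simplified] hu[of "-3", unfolded bu_def, simplified] hu[of "-2", unfolded bu_def, simplified] hu[of "-1", unfolded bu_def, simplified] hu[of 0, unfolded bu_def, simplified] hu[of 1, unfolded bu_def, simplified] hu[of 2, unfolded bu_def, simplified] hu[of 3, unfolded bu_def, simplified] hu[of 4, unfolded bu_def, simplified] hu[of 5, unfolded bu_def, simplified] hu[of 6, unfolded bu_def, simplified] hv[of "-4", unfolded bv_def, simplified] hv[of "-3", unfolded bv_def, simplified] hv[of "-2", unfolded bv_def, simplified] hv[of "-1", unfolded bv_def, simplified] hv[of 0, unfolded bv_def, simplified] hv[of 1, unfolded bv_def, simplified] hv[of 2, unfolded bv_def, simplified] hv[of 3, unfolded bv_def, simplified] hv[of 4, unfolded bv_def, simplified] hv[of 5, unfolded bv_def, simplified] hv[of 6, unfolded bv_def,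 simplified] hw[of "-4", unfolded bw_def, simplified] hw[of "-3", unfolded bw_def, simplified] hw[of "-2", unfolded bw_def, simplified] hw[of "-1", unfolded bw_def, simplified] hw[of 0, unfolded bw_def, simplified] hw[of 1, unfolded bw_def, simplified] hw[of 2, unfolded bw_def, simplified] hw[of 3, unfolded bw_def, simplified] hw[of 4, unfolded bw_def, simplified] hw[of 5, unfolded bw_def, simplified] hw[of 6, unfolded bw_def, simplified] hs[of "-4", unfolded bs_def, simplified] hs[of "-3", unfolded bs_def, simplified] hs[of "-2", unfolded bs_def, simplified] hs[of "-1", unfolded bs_def, simplified] hs[of 0, unfolded bs_def, simplified] hs[of 1, unfolded bs_def, simplified] hs[of 2, unfolded bs_def, simplified] hs[of 3, unfolded bs_def, simplified] hs[of 4, unfolded bs_def, simplified] hs[of 5, unfolded bs_def, simplified] hs[of 6, unfolded bs_def, simplified] ht[of "-4", unfolded bt_def, simplified] ht[of "-3", unfolded bt_def, simplified] ht[of "-2", unfolded bt_def, simplified] ht[of "-1", unfolded bt_def, simplified] ht[of 0, unfolded bt_def, simplified] ht[of 1, unfolded bt_def, simplified] ht[of 2, unfolded bt_def, simplified] ht[of 3, unfolded bt_def, simplified] ht[of 4, unfolded bt_def, simplified] ht[of 5, unfolded bt_def, simplified] ht[of 6, unfolded bt_def, simplified] hU[of "-4", unfolded Ub_def, simplified] hU[of "-3", unfolded Ub_def, simplified] hU[of "-2", unfolded Ub_def, simplified] hU[of "-1", unfolded Ub_def, simplified] hU[of 0, unfolded Ub_def, simplified] hU[of 1, unfolded Ub_def,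 simplified] hU[of 2, unfolded Ub_def, simplified] hU[of 3, unfolded Ub_def, simplified] hU[of 4, unfolded Ub_def, simplified] hU[of 5, unfolded Ub_def, simplified] hU[of 6, unfolded Ub_def, simplified]
  note E = corner_even0[OF ce'] and E0 = corner_even0[OF ce]
  note O = corner_odd0[OF co'] and O0 = corner_odd0[OF co]
  show ?thesis unfolding E(4) E0(4) O(4) O0(4) h4_def Ub_def bu_def bv_def bw_def bt_def bg_def
    using NZ E(1) E(2) O(1) O(2)
    by (simp add: T3_form L2 L3 M1 tri_cross_dot srt1 srt2 field_simps power2_eq_square power3_eq_cube)
qed


lemma tel_aux: "(\<Prod>i\<in>{0..<int m}. H (i+1)) * H 0 = (\<Prod>i\<in>{0..<int m}. H i) * (H (int m) :: real)"
proof (induction m)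
  case 0 then show ?case by simp
next
  case (Suc m)
  have e: "{0..<int (Suc m)} = insert (int m) {0..<int m}" by auto
  show ?case unfolding e using Suc by (simp add: algebra_simps)
qed

lemma telescope:
  fixes f g H :: "int \<Rightarrow> real"
  assumes "\<And>i. i \<in> {0..<int n} \<Longrightarrow> f i * H (i+1) = g i * H i"
    and "H (int n) = H 0" and "\<And>i. i \<in> {0..<int n} \<Longrightarrow> H i \<noteq> 0" and "0 < n"
  shows "(\<Prod>i\<in>{0..<int n}. f i) = (\<Prod>i\<in>{0..<int n}. g i)"
proof -
  have H0: "H 0 \<noteq> 0" using assms(3)[of 0] assms(4) by simp
  have sh: "(\<Prod>i\<in>{0..<int n}. H (i+1)) = (\<Prod>i\<in>{0..<int n}. H i)"
    using tel_aux[of H n] assms(2) H0 by simp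
  have nz: "(\<Prod>i\<in>{0..<int n}. H i) \<noteq> 0" using assms(3) by (simp add: prod_zero_iff)
  have "(\<Prod>i\<in>{0..<int n}. f i) * (\<Prod>i\<in>{0..<int n}. H (i+1)) = (\<Prod>i\<in>{0..<int n}. f i * H (i+1))"
    by (simp add: prod.distrib)
  also have "\<dots> = (\<Prod>i\<in>{0..<int n}. g i * H i)" using assms(1) by (intro prod.cong) auto
  also have "\<dots> = (\<Prod>i\<in>{0..<int n}. g i) * (\<Prod>i\<in>{0..<int n}. H i)" by (simp add: prod.distrib)
  finally show ?thesis using sh nz by simp
qed

lemma shift_corner_even: "corner_even (\<lambda>k. P (i+k)) 0 = corner_even P i"
  unfolding corner_even_def by simp
lemma shift_corner_odd: "corner_odd (\<lambda>k. P (i+k)) 0 = corner_odd P i"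
  unfolding corner_odd_def by simp
lemma shift_T3: "T3 (\<lambda>k. P (i+k)) = (\<lambda>k. T3 P (i+k))"
  unfolding T3_def by (simp add: add.assoc)
lemma shift_shift: "(\<lambda>k. P ((i::int) + (1+k))) = (\<lambda>k. P ((i+1)+k))"
  by (rule ext) (simp add: algebra_simps)

lemma shift_b:
  "bu (\<lambda>k. P (i+k)) k = bu P (i+k)" "bv (\<lambda>k. P (i+k)) k = bv P (i+k)"
  "bw (\<lambda>k. P (i+k)) k = bw P (i+k)" "bs (\<lambda>k. P (i+k)) k = bs P (i+k)"
  "bt (\<lambda>k. P (i+k)) k = bt P (i+k)" "bg (\<lambda>k. P (i+k)) k = bg P (i+k)"
  "Ub (\<lambda>k. P (i+k)) k = Ub P (i+k)"
  unfolding bu_def bv_def bw_def bs_def bt_def bg_def Ub_def by (simp_all add: add.assoc)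

lemma uprime: "tri (T3 q 0) (T3 q 1) (T3 q 2) = Ub q 0 * Ub q 1"
  by (simp add: T3_form L2 Ub_def)

lemma gnz: assumes "corner_even (T3 q) 0 \<noteq> None" shows "bg q (-2) \<noteq> 0 \<and> bg q (-1) \<noteq> 0"
proof -
  have srt1: "\<And>a b c. b < a \<Longrightarrow> tri (q a) (q b) (q c) = - tri (q b) (q a) (q c)" by (metis tri_swap)
  have srt2: "\<And>a b c. c < b \<Longrightarrow> tri (q a) (q b) (q c) = - tri (q a) (q c) (q b)" by (metis tri_swap23)
  note E = corner_even0[OF assms]
  show ?thesis using E(1) E(2) unfolding bg_def
    by (simp add: T3_form L2 L3 M1 tri_cross_dot srt1 srt2)
qed

lemma tri_sM: "tri (a *\<^sub>R (M *v x)) (b *\<^sub>R (M *v y)) (c *\<^sub>R (M *v z)) = a * b * c * det M * tri x y z"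
  by (simp add: tri_scale tri_M)

lemma UM: "tri ((a *\<^sub>R (M *v x1)) \<times> (b *\<^sub>R (M *v x2))) ((c *\<^sub>R (M *v x3)) \<times> (d *\<^sub>R (M *v x4)))
   ((e *\<^sub>R (M *v x5)) \<times> (f *\<^sub>R (M *v x6))) = a*b*c*d*e*f*(det M)^2 * tri (x1 \<times> x2) (x3 \<times> x4) (x5 \<times> x6)"
  unfolding Uexp tri_sM by (simp add: algebra_simps power2_eq_square)

lemma per1: assumes "\<And>k. c k \<noteq> 0" "det M \<noteq> 0"
  shows "h1 (\<lambda>k. c k *\<^sub>R (M *v q k)) = h1 q"
  unfolding h1_def Ub_def bu_def bv_def UM tri_sM using assms by (simp add: field_simps power2_eq_square power3_eq_cube)
lemma per2: assumes "\<And>k. c k \<noteq> 0" "det M \<noteq> 0"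
  shows "h2 (\<lambda>k. c k *\<^sub>R (M *v q k)) = h2 q"
  unfolding h2_def Ub_def bu_def bw_def bt_def UM tri_sM using assms by (simp add: field_simps power2_eq_square power3_eq_cube)
lemma per3: assumes "\<And>k. c k \<noteq> 0" "det M \<noteq> 0"
  shows "h3 (\<lambda>k. c k *\<^sub>R (M *v q k)) = h3 q"
  unfolding h3_def Ub_def bu_def bv_def bw_def bg_def UM tri_sM using assms by (simp add: field_simps power2_eq_square power3_eq_cube)
lemma per4: assumes "\<And>k. c k \<noteq> 0" "det M \<noteq> 0"
  shows "h4 (\<lambda>k. c k *\<^sub>R (M *v q k)) = h4 q"
  unfolding h4_def Ub_def bv_def bw_def bt_def bg_def UM tri_sM using assms by (simp add: field_simps power2_eq_square power3_eq_cube)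


lemma basic:
  assumes "twisted_ngon n P" "three_nice P" "twisted_ngon n (T3 P)"
  shows "bu P m \<noteq> 0" "bv P m \<noteq> 0" "bw P m \<noteq> 0" "bs P m \<noteq> 0" "bt P m \<noteq> 0" "Ub P m \<noteq> 0"
proof -
  have col: "\<And>A B C. collinear3 A B C \<longleftrightarrow> tri A B C = 0" unfolding collinear3_def by (simp add: tri_cross_dot)
  from assms(1) show "bu P m \<noteq> 0" unfolding twisted_ngon_def bu_def col by (simp add: add.assoc)
  from assms(2) have g: "general_position4 (P m) (P (m+1)) (P (m+3)) (P (m+4))" unfolding three_nice_def by blast
  then show "bv P m \<noteq> 0" "bs P m \<noteq> 0" "bt P m \<noteq> 0" unfolding general_position4_def col bv_def bs_def bt_def by auto
  from assms(2) have "general_position4 (P (m-1)) (P (m-1+1)) (P (m-1+3)) (P (m-1+4))" unfolding three_nice_def by blast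
  then show "bw P m \<noteq> 0" unfolding general_position4_def col bw_def by (simp add: algebra_simps)
  from assms(3) have "\<not> collinear3 (T3 P m) (T3 P (m+1)) (T3 P (m+2))" unfolding twisted_ngon_def by blast
  then have "tri (T3 (\<lambda>k. P (m+k)) 0) (T3 (\<lambda>k. P (m+k)) 1) (T3 (\<lambda>k. P (m+k)) 2) \<noteq> 0"
    unfolding col shift_T3 by simp
  then show "Ub P m \<noteq> 0" unfolding uprime shift_b by simp
qed

lemma monodromy:
  assumes "twisted_ngon n P"
  obtains M c where "det M \<noteq> 0" "\<And>k. c k \<noteq> 0" "(\<lambda>k. P (int n + k)) = (\<lambda>k. c k *\<^sub>R (M *v P k))"
proof -
  from assms obtain M :: "real^3^3" where M: "invertible M"
    "\<forall>i. \<exists>c::real. c \<noteq> 0 \<and> P (i + int n) = c *\<^sub>R (M *v P i)" unfolding twisted_ngon_def by blast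
  from M(2) obtain c where c: "\<forall>i. c i \<noteq> 0 \<and> P (i + int n) = c i *\<^sub>R (M *v P i)" by metis
  have "(\<lambda>k. P (int n + k)) = (\<lambda>k. c k *\<^sub>R (M *v P k))"
    using c by (auto simp: add.commute)
  moreover have "det M \<noteq> 0" using M(1) invertible_det_nz by blast
  ultimately show ?thesis using that c by blast
qed

lemma main1:
  assumes "0 < n" "twisted_ngon n P" "three_nice P" "twisted_ngon n (T3 P)"
    "Finv 1 n P \<noteq> None" "Finv 1 n (T3 P) \<noteq> None"
  shows "Finv 1 n (T3 P) = Finv 1 n P"
proof -
  note B = basic[OF assms(2,3,4)]
  have hb: "\<And>i. (\<And>k. bu (\<lambda>k. P (i+k)) k \<noteq> 0)" "\<And>i. (\<And>k. bv (\<lambda>k. P (i+k)) k \<noteq> 0)"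
    "\<And>i. (\<And>k. bw (\<lambda>k. P (i+k)) k \<noteq> 0)" "\<And>i. (\<And>k. bs (\<lambda>k. P (i+k)) k \<noteq> 0)"
    "\<And>i. (\<And>k. bt (\<lambda>k. P (i+k)) k \<noteq> 0)" "\<And>i. (\<And>k. Ub (\<lambda>k. P (i+k)) k \<noteq> 0)"
    unfolding shift_b using B by auto
  obtain M c where Mc: "det M \<noteq> 0" "\<And>k. c k \<noteq> 0" "(\<lambda>k. P (int n + k)) = (\<lambda>k. c k *\<^sub>R (M *v P k))"
    using monodromy[OF assms(2)] by blast
  from assms(5) have A: "\<forall>i\<in>{0..<int n}. corner_even P i \<noteq> None \<and> the (corner_even P i) - 1 \<noteq> 0"
    unfolding Finv_def Let_def by (auto split: if_splits)
  from assms(6) have A': "\<forall>i\<in>{0..<int n}. corner_even (T3 P) i \<noteq> None \<and> the (corner_even (T3 P) i) - 1 \<noteq> 0"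
    unfolding Finv_def Let_def by (auto split: if_splits)
  let ?H = "\<lambda>i. h1 (\<lambda>k. P (i+k))"
  have "(\<Prod>i\<in>{0..<int n}. the (corner_even (T3 P) i) / (the (corner_even (T3 P) i) - 1))
      = (\<Prod>i\<in>{0..<int n}. the (corner_even P i) / (the (corner_even P i) - 1))"
  proof (rule telescope[where H = ?H])
    fix i assume i: "i \<in> {0..<int n}"
    have ce: "corner_even (\<lambda>k. P (i+k)) 0 \<noteq> None" using A i by (simp add: shift_corner_even)
    have ce': "corner_even (T3 (\<lambda>k. P (i+k))) 0 \<noteq> None" using A' i by (simp add: shift_T3 shift_corner_even)
    from loc1[OF hb(1)[of i] hb(2)[of i] hb(3)[of i] hb(4)[of i] hb(5)[of i] hb(6)[of i] ce ce']
    show "the (corner_even (T3 P) i) / (the (corner_even (T3 P) i) - 1) * ?H (i+1) =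
          the (corner_even P i) / (the (corner_even P i) - 1) * ?H i"
      unfolding shift_T3 shift_corner_even shift_shift by simp
  next
    show "?H (int n) = ?H 0" using per1[OF Mc(2) Mc(1), where q = P] Mc(3) by simp
  next
    fix i assume "i \<in> {0..<int n}"
    show "?H i \<noteq> 0" unfolding h1_def shift_b[symmetric] using hb by simp
  qed (rule assms(1))
  then show ?thesis using A A' unfolding Finv_def Let_def by simp
qed


lemma main2:
  assumes "0 < n" "twisted_ngon n P" "three_nice P" "twisted_ngon n (T3 P)"
    "Finv 2 n P \<noteq> None" "Finv 2 n (T3 P) \<noteq> None"
  shows "Finv 2 n (T3 P) = Finv 2 n P"
proof -
  note B = basic[OF assms(2,3,4)]
  have hb: "\<And>i. (\<And>k. bu (\<lambda>k. P (i+k)) k \<noteq> 0)" "\<And>i. (\<And>k. bv (\<lambda>k. P (i+k)) k \<noteq> 0)"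
    "\<And>i. (\<And>k. bw (\<lambda>k. P (i+k)) k \<noteq> 0)" "\<And>i. (\<And>k. bs (\<lambda>k. P (i+k)) k \<noteq> 0)"
    "\<And>i. (\<And>k. bt (\<lambda>k. P (i+k)) k \<noteq> 0)" "\<And>i. (\<And>k. Ub (\<lambda>k. P (i+k)) k \<noteq> 0)"
    unfolding shift_b using B by auto
  obtain M c where Mc: "det M \<noteq> 0" "\<And>k. c k \<noteq> 0" "(\<lambda>k. P (int n + k)) = (\<lambda>k. c k *\<^sub>R (M *v P k))"
    using monodromy[OF assms(2)] by blast
  from assms(5) have A: "\<forall>i\<in>{0..<int n}. corner_odd P i \<noteq> None \<and> the (corner_odd P i) - 1 \<noteq> 0"
    unfolding Finv_def Let_def by (auto split: if_splits)
  from assms(6) have A': "\<forall>i\<in>{0..<int n}. corner_odd (T3 P) i \<noteq> None \<and> the (corner_odd (T3 P) i) - 1 \<noteq> 0"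
    unfolding Finv_def Let_def by (auto split: if_splits)
  let ?H = "\<lambda>i. h2 (\<lambda>k. P (i+k))"
  have "(\<Prod>i\<in>{0..<int n}. the (corner_odd (T3 P) i) / (the (corner_odd (T3 P) i) - 1))
      = (\<Prod>i\<in>{0..<int n}. the (corner_odd P i) / (the (corner_odd P i) - 1))"
  proof (rule telescope[where H = ?H])
    fix i assume i: "i \<in> {0..<int n}"
    have ce: "corner_odd (\<lambda>k. P (i+k)) 0 \<noteq> None" using A i by (simp add: shift_corner_odd)
    have ce': "corner_odd (T3 (\<lambda>k. P (i+k))) 0 \<noteq> None" using A' i by (simp add: shift_T3 shift_corner_odd)
    from loc2[OF hb(1)[of i] hb(2)[of i] hb(3)[of i] hb(4)[of i] hb(5)[of i] hb(6)[of i] ce ce']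
    show "the (corner_odd (T3 P) i) / (the (corner_odd (T3 P) i) - 1) * ?H (i+1) =
          the (corner_odd P i) / (the (corner_odd P i) - 1) * ?H i"
      unfolding shift_T3 shift_corner_even shift_corner_odd shift_shift by simp
  next
    show "?H (int n) = ?H 0" using per2[OF Mc(2) Mc(1), where q = P] Mc(3) by simp
  next
    fix i assume "i \<in> {0..<int n}"
    show "?H i \<noteq> 0" unfolding h2_def shift_b[symmetric] using hb by simp
  qed (rule assms(1))
  then show ?thesis using A A' unfolding Finv_def Let_def by simp
qed

lemma main3:
  assumes "0 < n" "twisted_ngon n P" "three_nice P" "twisted_ngon n (T3 P)"
    "Finv 3 n P \<noteq> None" "Finv 3 n (T3 P) \<noteq> None"
  shows "Finv 3 n (T3 P) = Finv 3 n P"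
proof -
  note B = basic[OF assms(2,3,4)]
  have hb: "\<And>i. (\<And>k. bu (\<lambda>k. P (i+k)) k \<noteq> 0)" "\<And>i. (\<And>k. bv (\<lambda>k. P (i+k)) k \<noteq> 0)"
    "\<And>i. (\<And>k. bw (\<lambda>k. P (i+k)) k \<noteq> 0)" "\<And>i. (\<And>k. bs (\<lambda>k. P (i+k)) k \<noteq> 0)"
    "\<And>i. (\<And>k. bt (\<lambda>k. P (i+k)) k \<noteq> 0)" "\<And>i. (\<And>k. Ub (\<lambda>k. P (i+k)) k \<noteq> 0)"
    unfolding shift_b using B by auto
  obtain M c where Mc: "det M \<noteq> 0" "\<And>k. c k \<noteq> 0" "(\<lambda>k. P (int n + k)) = (\<lambda>k. c k *\<^sub>R (M *v P k))"
    using monodromy[OF assms(2)] by blast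
  from assms(5) have A: "\<forall>i\<in>{0..<int n}. corner_even P i \<noteq> None \<and> corner_odd P i \<noteq> None \<and> the (corner_odd P i) \<noteq> 0"
    unfolding Finv_def Let_def by (auto split: if_splits)
  from assms(6) have A': "\<forall>i\<in>{0..<int n}. corner_even (T3 P) i \<noteq> None \<and> corner_odd (T3 P) i \<noteq> None \<and> the (corner_odd (T3 P) i) \<noteq> 0"
    unfolding Finv_def Let_def by (auto split: if_splits)
  let ?H = "\<lambda>i. h3 (\<lambda>k. P (i+k))"
  have "(\<Prod>i\<in>{0..<int n}. the (corner_even (T3 P) i) / the (corner_odd (T3 P) i))
      = (\<Prod>i\<in>{0..<int n}. the (corner_even P i) / the (corner_odd P i))"
  proof (rule telescope[where H = ?H])
    fix i assume i: "i \<in> {0..<int n}"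
    have ce: "corner_even (\<lambda>k. P (i+k)) 0 \<noteq> None" "corner_odd (\<lambda>k. P (i+k)) 0 \<noteq> None" using A i by (simp_all add: shift_corner_even shift_corner_odd)
    have ce': "corner_even (T3 (\<lambda>k. P (i+k))) 0 \<noteq> None" "corner_odd (T3 (\<lambda>k. P (i+k))) 0 \<noteq> None" using A' i by (simp_all add: shift_T3 shift_corner_even shift_corner_odd)
    from loc3[OF hb(1)[of i] hb(2)[of i] hb(3)[of i] hb(4)[of i] hb(5)[of i] hb(6)[of i] ce(1) ce'(1) ce(2) ce'(2)]
    show "the (corner_even (T3 P) i) / the (corner_odd (T3 P) i) * ?H (i+1) =
          the (corner_even P i) / the (corner_odd P i) * ?H i"
      unfolding shift_T3 shift_corner_even shift_corner_odd shift_shift by simp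
  next
    show "?H (int n) = ?H 0" using per3[OF Mc(2) Mc(1), where q = P] Mc(3) by simp
  next
    fix i assume i: "i \<in> {0..<int n}"
    have "corner_even (T3 (\<lambda>k. P (i+k))) 0 \<noteq> None" using A' i by (simp add: shift_T3 shift_corner_even)
    note G = gnz[OF this]
    show "?H i \<noteq> 0" using G unfolding h3_def shift_b[symmetric] using hb by simp
  qed (rule assms(1))
  then show ?thesis using A A' unfolding Finv_def Let_def by simp
qed

lemma main4:
  assumes "0 < n" "twisted_ngon n P" "three_nice P" "twisted_ngon n (T3 P)"
    "Finv 4 n P \<noteq> None" "Finv 4 n (T3 P) \<noteq> None"
  shows "Finv 4 n (T3 P) = Finv 4 n P"
proof -
  note B = basic[OF assms(2,3,4)]
  have hb: "\<And>i. (\<And>k. bu (\<lambda>k. P (i+k)) k \<noteq> 0)" "\<And>i. (\<And>k. bv (\<lambda>k. P (i+k)) k \<noteq> 0)"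
    "\<And>i. (\<And>k. bw (\<lambda>k. P (i+k)) k \<noteq> 0)" "\<And>i. (\<And>k. bs (\<lambda>k. P (i+k)) k \<noteq> 0)"
    "\<And>i. (\<And>k. bt (\<lambda>k. P (i+k)) k \<noteq> 0)" "\<And>i. (\<And>k. Ub (\<lambda>k. P (i+k)) k \<noteq> 0)"
    unfolding shift_b using B by auto
  obtain M c where Mc: "det M \<noteq> 0" "\<And>k. c k \<noteq> 0" "(\<lambda>k. P (int n + k)) = (\<lambda>k. c k *\<^sub>R (M *v P k))"
    using monodromy[OF assms(2)] by blast
  from assms(5) have A: "\<forall>i\<in>{0..<int n}. corner_even P i \<noteq> None \<and> corner_odd P i \<noteq> None \<and> 1 - the (corner_odd P i) \<noteq> 0"
    unfolding Finv_def Let_def by (auto split: if_splits)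
  from assms(6) have A': "\<forall>i\<in>{0..<int n}. corner_even (T3 P) i \<noteq> None \<and> corner_odd (T3 P) i \<noteq> None \<and> 1 - the (corner_odd (T3 P) i) \<noteq> 0"
    unfolding Finv_def Let_def by (auto split: if_splits)
  let ?H = "\<lambda>i. h4 (\<lambda>k. P (i+k))"
  have "(\<Prod>i\<in>{0..<int n}. (1 - the (corner_even (T3 P) i)) / (1 - the (corner_odd (T3 P) i)))
      = (\<Prod>i\<in>{0..<int n}. (1 - the (corner_even P i)) / (1 - the (corner_odd P i)))"
  proof (rule telescope[where H = ?H])
    fix i assume i: "i \<in> {0..<int n}"
    have ce: "corner_even (\<lambda>k. P (i+k)) 0 \<noteq> None" "corner_odd (\<lambda>k. P (i+k)) 0 \<noteq> None" using A i by (simp_all add: shift_corner_even shift_corner_odd)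
    have ce': "corner_even (T3 (\<lambda>k. P (i+k))) 0 \<noteq> None" "corner_odd (T3 (\<lambda>k. P (i+k))) 0 \<noteq> None" using A' i by (simp_all add: shift_T3 shift_corner_even shift_corner_odd)
    from loc4[OF hb(1)[of i] hb(2)[of i] hb(3)[of i] hb(4)[of i] hb(5)[of i] hb(6)[of i] ce(1) ce'(1) ce(2) ce'(2)]
    show "(1 - the (corner_even (T3 P) i)) / (1 - the (corner_odd (T3 P) i)) * ?H (i+1) =
          (1 - the (corner_even P i)) / (1 - the (corner_odd P i)) * ?H i"
      unfolding shift_T3 shift_corner_even shift_corner_odd shift_shift by simp
  next
    show "?H (int n) = ?H 0" using per4[OF Mc(2) Mc(1), where q = P] Mc(3) by simp
  next
    fix i assume i: "i \<in> {0..<int n}"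
    have "corner_even (T3 (\<lambda>k. P (i+k))) 0 \<noteq> None" using A' i by (simp add: shift_T3 shift_corner_even)
    note G = gnz[OF this]
    show "?H i \<noteq> 0" using G unfolding h4_def shift_b[symmetric] using hb by simp
  qed (rule assms(1))
  then show ?thesis using A A' unfolding Finv_def Let_def by simp
qed

theorem mainTheorem17:
  fixes n j :: nat and P :: "int \<Rightarrow> real^3"
  assumes "0 < n"
    and "twisted_ngon n P" and "three_nice P"
    and "twisted_ngon n (T3 P)"
    and "j \<in> {1,2,3,4}"
    and "Finv j n P \<noteq> None" and "Finv j n (T3 P) \<noteq> None"
  shows "Finv j n (T3 P) = Finv j n P"
  using assms main1[of n P] main2[of n P] main3[of n P] main4[of n P] by auto

end
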